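(* Let $G$ be a connected graph with vertex set $\{u_1,\dots,u_n\}$, $n\ge2$, having no pair of distinct true twins, and let $\mathcal{H}=\{H_1,\dots,H_n\}$ be a family of non-empty graphs, $H_i$ of order $n_i$. Then $\dim_l(G\circ\mathcal{H})=\sum_{i=1}^n n_i-n$ if and only if $H_i\cong K_{n_i}$ for all $i$.
   Context: All graphs are finite and simple; non-empty means having at least one edge. True twins: distinct vertices $x,y$ with $N[x]=N[y]$. For a connected graph $G$, $\dim_l(G)$ is the minimum size of $S\subseteq V(G)$ such that for every two adjacent vertices $x,y$ there is $s\in S$ with $d_G(s,x)\ne d_G(s,y)$ ($d_G$ the shortest-path distance). Lexicographic product $G\circ\mathcal{H}$: vertex set $\bigcup_i\{u_i\}\times V(H_i)$, $(u_i,v)\sim(u_j,w)$ iff $u_iu_j\in E(G)$, or $i=j$ and $vw\in E(H_i)$. *)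

theory Defs
  imports Main
begin

type_synonym 'a graph = "'a set \<times> ('a \<Rightarrow> 'a \<Rightarrow> bool)"

definition verts :: "'a graph \<Rightarrow> 'a set" where "verts G = fst G"
definition adj :: "'a graph \<Rightarrow> 'a \<Rightarrow> 'a \<Rightarrow> bool" where "adj G = snd G"

definition simple_graph :: "'a graph \<Rightarrow> bool" where
  "simple_graph G \<longleftrightarrow> finite (verts G)
     \<and> (\<forall>x y. adj G x y \<longrightarrow> x \<in> verts G \<and> y \<in> verts G)
     \<and> (\<forall>x y. adj G x y \<longrightarrow> adj G y x)
     \<and> (\<forall>x. \<not> adj G x x)"

definition nonempty_graph :: "'a graph \<Rightarrow> bool" where
  "nonempty_graph G \<longleftrightarrow> (\<exists>x y. adj G x y)"

definition walk :: "'a graph \<Rightarrow> 'a list \<Rightarrow> bool" where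
  "walk G p \<longleftrightarrow> p \<noteq> [] \<and> set p \<subseteq> verts G
     \<and> (\<forall>i. Suc i < length p \<longrightarrow> adj G (p ! i) (p ! Suc i))"

definition connected_graph :: "'a graph \<Rightarrow> bool" where
  "connected_graph G \<longleftrightarrow> (\<forall>x\<in>verts G. \<forall>y\<in>verts G.
      \<exists>p. walk G p \<and> hd p = x \<and> last p = y)"

definition dist :: "'a graph \<Rightarrow> 'a \<Rightarrow> 'a \<Rightarrow> nat" where
  "dist G x y = (LEAST n. \<exists>p. walk G p \<and> hd p = x \<and> last p = y \<and> length p = Suc n)"

definition closed_nbhd :: "'a graph \<Rightarrow> 'a \<Rightarrow> 'a set" where
  "closed_nbhd G x = {y \<in> verts G. adj G x y} \<union> {x}"

definition true_twins :: "'a graph \<Rightarrow> 'a \<Rightarrow> 'a \<Rightarrow> bool" where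
  "true_twins G x y \<longleftrightarrow> x \<in> verts G \<and> y \<in> verts G \<and> x \<noteq> y
     \<and> closed_nbhd G x = closed_nbhd G y"

definition local_resolving_set :: "'a graph \<Rightarrow> 'a set \<Rightarrow> bool" where
  "local_resolving_set G S \<longleftrightarrow> S \<subseteq> verts G \<and>
     (\<forall>x\<in>verts G. \<forall>y\<in>verts G. adj G x y \<longrightarrow> (\<exists>s\<in>S. dist G s x \<noteq> dist G s y))"

definition local_metric_dim :: "'a graph \<Rightarrow> nat" where
  "local_metric_dim G = (LEAST k. \<exists>S. local_resolving_set G S \<and> card S = k)"

definition lex_product :: "'a graph \<Rightarrow> ('a \<Rightarrow> 'b graph) \<Rightarrow> ('a \<times> 'b) graph" where
  "lex_product G H =
     (SIGMA u:verts G. verts (H u),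
      \<lambda>(u, v) (u', w). (u, v) \<in> (SIGMA u:verts G. verts (H u))
          \<and> (u', w) \<in> (SIGMA u:verts G. verts (H u))
          \<and> (adj G u u' \<or> (u = u' \<and> adj (H u) v w)))"

definition complete_graph :: "nat \<Rightarrow> nat graph" where
  "complete_graph n = ({0..<n}, \<lambda>i j. i < n \<and> j < n \<and> i \<noteq> j)"

definition graph_iso :: "'a graph \<Rightarrow> 'b graph \<Rightarrow> bool" where
  "graph_iso G H \<longleftrightarrow> (\<exists>f. bij_betw f (verts G) (verts H)
     \<and> (\<forall>x\<in>verts G. \<forall>y\<in>verts G. adj G x y \<longleftrightarrow> adj H (f x) (f y)))"

end

theory Submission
  imports Defs
begin

lemma verts_lex: "verts (lex_product G H) = (SIGMA u:verts G. verts (H u))"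
  by (simp add: lex_product_def verts_def)

lemma adj_lex: "adj (lex_product G H) (a1,a2) (b1,b2) \<longleftrightarrow>
   a1 \<in> verts G \<and> a2 \<in> verts (H a1) \<and> b1 \<in> verts G \<and> b2 \<in> verts (H b1)
   \<and> (adj G a1 b1 \<or> a1 = b1 \<and> adj (H a1) a2 b2)"
  by (simp add: lex_product_def adj_def verts_def)

lemma dist_self: "x \<in> verts P \<Longrightarrow> dist P x x = 0"
  unfolding dist_def
  by (rule Least_eq_0, rule exI[of _ "[x]"], simp add: walk_def)

lemma dist_adj:
  assumes "adj P x y" "x \<noteq> y" "x \<in> verts P" "y \<in> verts P"
  shows "dist P x y = 1"
  unfolding dist_def
proof (rule Least_equality)
  show "\<exists>p. walk P p \<and> hd p = x \<and> last p = y \<and> length p = Suc 1"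
    using assms by (intro exI[of _ "[x,y]"]) (auto simp: walk_def nth_Cons split: nat.splits)
next
  fix m assume "\<exists>p. walk P p \<and> hd p = x \<and> last p = y \<and> length p = Suc m"
  then obtain p where p: "walk P p" "hd p = x" "last p = y" "length p = Suc m" by blast
  show "1 \<le> m"
  proof (rule ccontr)
    assume "\<not> 1 \<le> m"
    then have "m = 0" by simp
    with p obtain a where "p = [a]" by (cases p) auto
    with p assms(2) show False by simp
  qed
qed

lemma dist_not1:
  assumes "walk P p" "hd p = x" "last p = y" "\<not> adj P x y"
  shows "dist P x y \<noteq> 1"
proof
  assume d: "dist P x y = 1"
  have "\<exists>q. walk P q \<and> hd q = x \<and> last q = y \<and> length q = Suc (dist P x y)"
    unfolding dist_def
    by (rule LeastI[of _ "length p - 1"]) (use assms in \<open>auto simp: walk_def\<close>)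
  then obtain q where q: "walk P q" "hd q = x" "last q = y" "length q = 2"
    using d by auto
  then obtain a b where "q = [a,b]"
    by (cases q; cases "tl q") auto
  with q assms(4) show False
    by (auto simp: walk_def dest: spec[of _ 0])
qed

lemma walk_map:
  assumes "\<forall>a\<in>verts P. \<phi> a \<in> verts P" "\<forall>a b. adj P a b \<longrightarrow> adj P (\<phi> a) (\<phi> b)"
    and "walk P p"
  shows "walk P (map \<phi> p)"
  using assms unfolding walk_def by auto

lemma dist_auto:
  assumes inv: "\<forall>a. \<phi> (\<phi> a) = a" and V: "\<forall>a\<in>verts P. \<phi> a \<in> verts P"
    and A: "\<forall>a b. adj P a b \<longrightarrow> adj P (\<phi> a) (\<phi> b)"
  shows "dist P (\<phi> a) (\<phi> b) = dist P a b"
proof -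
  have W: "walk P p \<Longrightarrow> walk P (map \<phi> p)" for p using walk_map[OF V A] .
  have "(\<lambda>n. \<exists>p. walk P p \<and> hd p = \<phi> a \<and> last p = \<phi> b \<and> length p = Suc n)
      = (\<lambda>n. \<exists>p. walk P p \<and> hd p = a \<and> last p = b \<and> length p = Suc n)"
  proof (rule ext, rule iffI)
    fix n assume "\<exists>p. walk P p \<and> hd p = \<phi> a \<and> last p = \<phi> b \<and> length p = Suc n"
    then obtain p where p: "walk P p" "hd p = \<phi> a" "last p = \<phi> b" "length p = Suc n" by blast
    then have "p \<noteq> []" by (auto simp: walk_def)
    then show "\<exists>p. walk P p \<and> hd p = a \<and> last p = b \<and> length p = Suc n"
      using p W[of p] inv by (intro exI[of _ "map \<phi> p"]) (auto simp: hd_map last_map)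
  next
    fix n assume "\<exists>p. walk P p \<and> hd p = a \<and> last p = b \<and> length p = Suc n"
    then obtain p where p: "walk P p" "hd p = a" "last p = b" "length p = Suc n" by blast
    then have "p \<noteq> []" by (auto simp: walk_def)
    then show "\<exists>p. walk P p \<and> hd p = \<phi> a \<and> last p = \<phi> b \<and> length p = Suc n"
      using p W[of p] inv by (intro exI[of _ "map \<phi> p"]) (auto simp: hd_map last_map)
  qed
  then show ?thesis unfolding dist_def by simp
qed

lemma iso_complete:
  assumes "simple_graph H"
  shows "graph_iso H (complete_graph (card (verts H))) \<longleftrightarrow>
         (\<forall>a\<in>verts H. \<forall>b\<in>verts H. adj H a b \<longleftrightarrow> a \<noteq> b)"
proof
  assume "graph_iso H (complete_graph (card (verts H)))"
  then obtain f where f: "bij_betw f (verts H) {0..<card (verts H)}"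
    "\<forall>x\<in>verts H. \<forall>y\<in>verts H. adj H x y \<longleftrightarrow> adj (complete_graph (card (verts H))) (f x) (f y)"
    by (auto simp: graph_iso_def complete_graph_def verts_def)
  show "\<forall>a\<in>verts H. \<forall>b\<in>verts H. adj H a b \<longleftrightarrow> a \<noteq> b"
    using f unfolding bij_betw_def inj_on_def complete_graph_def adj_def by auto
next
  assume c: "\<forall>a\<in>verts H. \<forall>b\<in>verts H. adj H a b \<longleftrightarrow> a \<noteq> b"
  have "finite (verts H)" using assms by (simp add: simple_graph_def)
  then obtain f where f: "bij_betw f (verts H) {0..<card (verts H)}"
    using ex_bij_betw_finite_nat by blast
  then show "graph_iso H (complete_graph (card (verts H)))"
    unfolding graph_iso_def using c
    by (intro exI[of _ f]) (auto simp: complete_graph_def adj_def verts_def bij_betw_def inj_on_def)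
qed


lemma resolving:
  assumes G: "simple_graph G" and tw: "\<forall>x y. \<not> true_twins G x y"
    and Hs: "\<forall>u\<in>verts G. simple_graph (H u)"
    and De: "\<forall>u\<in>verts G. \<forall>x\<in>verts (H u). \<forall>y\<in>verts (H u). adj (H u) x y \<longrightarrow> x \<notin> D u \<or> y \<notin> D u"
    and Dn: "\<forall>u\<in>verts G. verts (H u) - D u \<noteq> {}"
  shows "local_resolving_set (lex_product G H) (SIGMA u:verts G. verts (H u) - D u)"
  unfolding local_resolving_set_def
proof (intro conjI ballI impI)
  let ?P = "lex_product G H"
  show "(SIGMA u:verts G. verts (H u) - D u) \<subseteq> verts ?P" by (auto simp: verts_lex)
  fix x y assume x: "x \<in> verts ?P" and y: "y \<in> verts ?P" and xy: "adj ?P x y"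
  obtain u v where xe: "x = (u,v)" by (cases x)
  obtain u' w where ye: "y = (u',w)" by (cases y)
  have Gsym: "\<And>a b. adj G a b \<Longrightarrow> adj G b a" and Girr: "\<And>a. \<not> adj G a a"
    and GV: "\<And>a b. adj G a b \<Longrightarrow> a \<in> verts G \<and> b \<in> verts G"
    using G by (auto simp: simple_graph_def)
  have uV: "u \<in> verts G" "v \<in> verts (H u)" "u' \<in> verts G" "w \<in> verts (H u')"
    using x y xe ye by (auto simp: verts_lex)
  have Hu: "simple_graph (H u)" using Hs uV by blast
  have Hsym: "adj (H u) v w \<Longrightarrow> adj (H u) w v"
    using Hu unfolding simple_graph_def by blast
  have xy': "adj G u u' \<or> u = u' \<and> adj (H u) v w"
    using xy unfolding xe ye adj_lex by blast
  have "adj G u' u \<or> u' = u \<and> adj (H u') w v"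
    using xy' Hsym Gsym[of u u'] by blast
  then have yx: "adj ?P y x"
    using uV unfolding xe ye adj_lex by blast
  show "\<exists>s\<in>SIGMA u:verts G. verts (H u) - D u. dist ?P s x \<noteq> dist ?P s y"
  proof (cases "u = u'")
    case True
    then have huv: "adj (H u) v w" using xy' Girr by blast
    then have "v \<noteq> w" using Hu unfolding simple_graph_def by blast
    then have ne: "x \<noteq> y" using xe ye by auto
    from De huv uV True have "v \<notin> D u \<or> w \<notin> D u" by blast
    then show ?thesis
    proof
      assume "v \<notin> D u"
      then have "x \<in> (SIGMA u:verts G. verts (H u) - D u)" using xe uV by auto
      moreover have "dist ?P x x = 0" using x by (rule dist_self)
      moreover have "dist ?P x y = 1" using dist_adj[OF xy ne x y] .
      ultimately show ?thesis by force
    next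
      assume "w \<notin> D u"
      then have "y \<in> (SIGMA u:verts G. verts (H u) - D u)" using ye uV True by auto
      moreover have "dist ?P y y = 0" using y by (rule dist_self)
      moreover have "dist ?P y x = 1" using dist_adj[OF yx _ y x] ne by auto
      ultimately show ?thesis by force
    qed
  next
    case False
    then have guu: "adj G u u'" using xy' by blast
    have "closed_nbhd G u \<noteq> closed_nbhd G u'"
      using tw[rule_format, of u u'] False uV unfolding true_twins_def by auto
    then obtain t where
      t: "(t \<in> closed_nbhd G u \<and> t \<notin> closed_nbhd G u') \<or> (t \<notin> closed_nbhd G u \<and> t \<in> closed_nbhd G u')"
      by blast
    then show ?thesis
    proof
      assume t1: "t \<in> closed_nbhd G u \<and> t \<notin> closed_nbhd G u'"
      have "u \<in> closed_nbhd G u'" using guu Gsym uV by (auto simp: closed_nbhd_def)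
      then have tu: "t \<noteq> u" using t1 by auto
      then have tV: "t \<in> verts G" "adj G t u" "t \<noteq> u'" "\<not> adj G t u'"
        using t1 Gsym[of u t] Gsym[of t u'] unfolding closed_nbhd_def by auto
      obtain z where z: "z \<in> verts (H t) - D t" using Dn tV by blast
      let ?s = "(t,z)"
      have sS: "?s \<in> (SIGMA u:verts G. verts (H u) - D u)" using z tV by auto
      have sv: "?s \<in> verts ?P" using z tV by (auto simp: verts_lex)
      have a1: "adj ?P ?s x" using tV z uV unfolding xe adj_lex by auto
      have d1: "dist ?P ?s x = 1" using dist_adj[OF a1 _ sv x] tu xe by auto
      have a2: "\<not> adj ?P ?s y" using tV unfolding ye adj_lex by auto
      have "walk ?P [?s, x, y]" using a1 xy sv x y by (auto simp: walk_def nth_Cons split: nat.splits)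
      then have d2: "dist ?P ?s y \<noteq> 1" using dist_not1[OF _ _ _ a2] by auto
      show ?thesis using sS d1 d2 by force
    next
      assume t1: "t \<notin> closed_nbhd G u \<and> t \<in> closed_nbhd G u'"
      have "u' \<in> closed_nbhd G u" using guu Gsym uV by (auto simp: closed_nbhd_def)
      then have tu: "t \<noteq> u'" using t1 by auto
      then have tV: "t \<in> verts G" "adj G t u'" "t \<noteq> u" "\<not> adj G t u"
        using t1 Gsym[of u' t] Gsym[of t u] unfolding closed_nbhd_def by auto
      obtain z where z: "z \<in> verts (H t) - D t" using Dn tV by blast
      let ?s = "(t,z)"
      have sS: "?s \<in> (SIGMA u:verts G. verts (H u) - D u)" using z tV by auto
      have sv: "?s \<in> verts ?P" using z tV by (auto simp: verts_lex)
      have a1: "adj ?P ?s y" using tV z uV unfolding ye adj_lex by auto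
      have d1: "dist ?P ?s y = 1" using dist_adj[OF a1 _ sv y] tu ye by auto
      have a2: "\<not> adj ?P ?s x" using tV unfolding xe adj_lex by auto
      have "walk ?P [?s, y, x]" using a1 yx sv x y by (auto simp: walk_def nth_Cons split: nat.splits)
      then have d2: "dist ?P ?s x \<noteq> 1" using dist_not1[OF _ _ _ a2] by auto
      show ?thesis using sS d1 d2 by force
    qed
  qed
qed


lemma lower:
  assumes G: "simple_graph G" and Hs: "\<forall>u\<in>verts G. simple_graph (H u)"
    and C: "\<forall>u\<in>verts G. \<forall>a\<in>verts (H u). \<forall>b\<in>verts (H u). adj (H u) a b \<longleftrightarrow> a \<noteq> b"
    and S: "local_resolving_set (lex_product G H) S"
  shows "(\<Sum>u\<in>verts G. card (verts (H u)) - 1) \<le> card S"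
proof -
  let ?P = "lex_product G H"
  have finG: "finite (verts G)" using G by (simp add: simple_graph_def)
  have finH: "\<And>u. u \<in> verts G \<Longrightarrow> finite (verts (H u))"
    using Hs by (simp add: simple_graph_def)
  define T where "T u = {v. (u,v) \<in> S}" for u
  have Ssub: "S \<subseteq> (SIGMA u:verts G. verts (H u))"
    using S by (simp add: local_resolving_set_def verts_lex)
  have Seq: "S = (SIGMA u:verts G. T u)" using Ssub by (auto simp: T_def)
  have Tsub: "\<And>u. u \<in> verts G \<Longrightarrow> T u \<subseteq> verts (H u)" using Ssub by (auto simp: T_def)
  have finT: "\<forall>u\<in>verts G. finite (T u)" using Tsub finH finite_subset by blast
  have cS: "card S = (\<Sum>u\<in>verts G. card (T u))"
    unfolding Seq using finG finT by simp
  have each: "card (verts (H u)) - 1 \<le> card (T u)" if uV: "u \<in> verts G" for u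
  proof -
    let ?R = "verts (H u) - T u"
    have finR: "finite ?R" using finH uV by blast
    have "\<forall>a\<in>?R. \<forall>b\<in>?R. a = b"
    proof (intro ballI, rule ccontr)
      fix a b assume aR: "a \<in> ?R" and bR: "b \<in> ?R" and ab: "a \<noteq> b"
      have Cu: "\<forall>x\<in>verts (H u). \<forall>y\<in>verts (H u). adj (H u) x y \<longleftrightarrow> x \<noteq> y" using C uV by blast
      have aV: "a \<in> verts (H u)" "b \<in> verts (H u)" using aR bR by auto
      have xy: "adj ?P (u,a) (u,b)" using Cu aV ab uV unfolding adj_lex by blast
      have xV: "(u,a) \<in> verts ?P" "(u,b) \<in> verts ?P" using aV uV by (auto simp: verts_lex)
      obtain s where sS: "s \<in> S" and sd: "dist ?P s (u,a) \<noteq> dist ?P s (u,b)"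
        using S xy xV unfolding local_resolving_set_def by blast
      define \<phi> where "\<phi> = (\<lambda>(p1,p2). (p1, if p1 = u then (if p2 = a then b else if p2 = b then a else p2) else p2))"
      have inv: "\<forall>p. \<phi> (\<phi> p) = p" by (auto simp: \<phi>_def)
      have V: "\<forall>p\<in>verts ?P. \<phi> p \<in> verts ?P" using aV by (auto simp: \<phi>_def verts_lex)
      have A: "\<forall>p q. adj ?P p q \<longrightarrow> adj ?P (\<phi> p) (\<phi> q)"
      proof (intro allI impI)
        fix p q assume pq: "adj ?P p q"
        obtain p1 p2 where pe: "p = (p1,p2)" by (cases p)
        obtain q1 q2 where qe: "q = (q1,q2)" by (cases q)
        have h: "p1 \<in> verts G \<and> p2 \<in> verts (H p1) \<and> q1 \<in> verts G \<and> q2 \<in> verts (H q1)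
           \<and> (adj G p1 q1 \<or> p1 = q1 \<and> adj (H p1) p2 q2)"
          using pq unfolding pe qe adj_lex by blast
        show "adj ?P (\<phi> p) (\<phi> q)"
          unfolding pe qe \<phi>_def using h Cu aV by (auto simp: adj_lex)
      qed
      have "dist ?P (\<phi> s) (\<phi> (u,a)) = dist ?P s (u,a)" by (rule dist_auto[OF inv V A])
      moreover have "\<phi> (u,a) = (u,b)" by (simp add: \<phi>_def)
      moreover have "\<phi> s = s"
      proof -
        obtain s1 s2 where se: "s = (s1,s2)" by (cases s)
        have "s1 = u \<Longrightarrow> s2 \<in> T u" using sS se by (simp add: T_def)
        then show ?thesis using aR bR se by (auto simp: \<phi>_def)
      qed
      ultimately show False using sd by simp
    qed
    then have "card ?R \<le> 1" using card_le_Suc0_iff_eq[OF finR] by simp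
    moreover have "card ?R = card (verts (H u)) - card (T u)"
      using card_Diff_subset[of "T u" "verts (H u)"] finT Tsub uV by blast
    ultimately show ?thesis by linarith
  qed
  show ?thesis unfolding cS by (rule sum_mono) (rule each)
qed


theorem theorem4:
  fixes G :: "'a graph" and H :: "'a \<Rightarrow> 'b graph"
  assumes "simple_graph G" and "connected_graph G" and "card (verts G) \<ge> 2"
    and "\<forall>x y. \<not> true_twins G x y"
    and "\<forall>u\<in>verts G. simple_graph (H u) \<and> nonempty_graph (H u)"
  shows "int (local_metric_dim (lex_product G H))
           = (\<Sum>u\<in>verts G. int (card (verts (H u)))) - int (card (verts G))
         \<longleftrightarrow> (\<forall>u\<in>verts G. graph_iso (H u) (complete_graph (card (verts (H u)))))"
proof -
  note G = assms(1) and tw = assms(4)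
  let ?P = "lex_product G H"
  let ?n = "\<lambda>u. card (verts (H u))"
  have Hs: "\<forall>u\<in>verts G. simple_graph (H u)" using assms(5) by blast
  have finG: "finite (verts G)" using G by (simp add: simple_graph_def)
  have finH: "\<And>u. u \<in> verts G \<Longrightarrow> finite (verts (H u))"
    using Hs by (simp add: simple_graph_def)
  have edge: "\<exists>x y. x \<in> verts (H u) \<and> y \<in> verts (H u) \<and> x \<noteq> y \<and> adj (H u) x y"
    if "u \<in> verts G" for u
  proof -
    have "simple_graph (H u)" "nonempty_graph (H u)" using assms(5) that by auto
    then show ?thesis unfolding simple_graph_def nonempty_graph_def by metis
  qed
  have irr: "\<And>u x. u \<in> verts G \<Longrightarrow> \<not> adj (H u) x x"
    using Hs by (simp add: simple_graph_def)
  have symH: "\<And>u x y. u \<in> verts G \<Longrightarrow> adj (H u) x y \<Longrightarrow> adj (H u) y x"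
    using Hs by (simp add: simple_graph_def)
  have n1: "\<And>u. u \<in> verts G \<Longrightarrow> 1 \<le> ?n u"
  proof -
    fix u assume u: "u \<in> verts G"
    then obtain x where "x \<in> verts (H u)" using edge by blast
    then show "1 \<le> ?n u" using finH[OF u] by (simp add: Suc_le_eq card_gt_0_iff, blast)
  qed
  define e where "e u = (SOME z. z \<in> verts (H u))" for u
  have eV: "\<And>u. u \<in> verts G \<Longrightarrow> e u \<in> verts (H u)"
    unfolding e_def using edge by (metis someI_ex)
  have Dn_of: "verts (H u) - D \<noteq> {}"
    if u: "u \<in> verts G" and De: "\<forall>x\<in>verts (H u). \<forall>y\<in>verts (H u). adj (H u) x y \<longrightarrow> x \<notin> D \<or> y \<notin> D"
    for u D
    using edge[OF u] De by blast
  have dimle: "local_metric_dim ?P \<le> card S" if "local_resolving_set ?P S" for S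
    unfolding local_metric_dim_def using that by (intro Least_le) blast
  have iso: "\<And>u. u \<in> verts G \<Longrightarrow> graph_iso (H u) (complete_graph (?n u)) \<longleftrightarrow>
         (\<forall>a\<in>verts (H u). \<forall>b\<in>verts (H u). adj (H u) a b \<longleftrightarrow> a \<noteq> b)"
    using iso_complete Hs by blast
  have isum: "int (\<Sum>u\<in>verts G. ?n u - 1) = (\<Sum>u\<in>verts G. int (?n u)) - int (card (verts G))"
  proof -
    have "int (\<Sum>u\<in>verts G. ?n u - 1) = (\<Sum>u\<in>verts G. int (?n u) - 1)"
      unfolding of_nat_sum using n1 by (intro sum.cong) (auto simp: of_nat_diff)
    also have "\<dots> = (\<Sum>u\<in>verts G. int (?n u)) - int (card (verts G))"
      by (simp add: sum_subtractf)
    finally show ?thesis .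
  qed
  show ?thesis
  proof
    assume eq: "int (local_metric_dim ?P) = (\<Sum>u\<in>verts G. int (?n u)) - int (card (verts G))"
    show "\<forall>u\<in>verts G. graph_iso (H u) (complete_graph (?n u))"
    proof (rule ccontr)
      assume "\<not> (\<forall>u\<in>verts G. graph_iso (H u) (complete_graph (?n u)))"
      then obtain u0 where u0: "u0 \<in> verts G" and nc: "\<not> graph_iso (H u0) (complete_graph (?n u0))"
        by blast
      then obtain a b where ab: "a \<in> verts (H u0)" "b \<in> verts (H u0)" "a \<noteq> b" "\<not> adj (H u0) a b"
        using iso[OF u0] irr[OF u0] by blast
      have nba: "\<not> adj (H u0) b a" using ab symH[OF u0] by blast
      define D where "D u = (if u = u0 then {a,b} else {e u})" for u
      have De: "\<forall>u\<in>verts G. \<forall>x\<in>verts (H u). \<forall>y\<in>verts (H u). adj (H u) x y \<longrightarrow> x \<notin> D u \<or> y \<notin> D u"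
        using ab nba irr by (auto simp: D_def)
      have Dn: "\<forall>u\<in>verts G. verts (H u) - D u \<noteq> {}" using Dn_of De by blast
      have R: "local_resolving_set ?P (SIGMA u:verts G. verts (H u) - D u)"
        by (rule resolving[OF G tw Hs De Dn])
      have DV: "\<And>u. u \<in> verts G \<Longrightarrow> D u \<subseteq> verts (H u)" using ab eV by (auto simp: D_def)
      have cD: "\<And>u. card (D u) = (if u = u0 then 2 else 1)" using ab by (simp add: D_def)
      have cS: "card (SIGMA u:verts G. verts (H u) - D u) = (\<Sum>u\<in>verts G. ?n u - card (D u))"
      proof -
        have "card (SIGMA u:verts G. verts (H u) - D u) = (\<Sum>u\<in>verts G. card (verts (H u) - D u))"
          using finG finH by simp
        also have "\<dots> = (\<Sum>u\<in>verts G. ?n u - card (D u))"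
        proof (rule sum.cong[OF refl])
          fix u assume u: "u \<in> verts G"
          have "finite (D u)" using finite_subset[OF DV[OF u] finH[OF u]] .
          then show "card (verts (H u) - D u) = ?n u - card (D u)"
            by (rule card_Diff_subset) (rule DV[OF u])
        qed
        finally show ?thesis .
      qed
      have sD: "(\<Sum>u\<in>verts G. int (card (D u))) = int (card (verts G)) + 1"
      proof -
        have "(\<Sum>u\<in>verts G. int (card (D u))) = int (card (D u0)) + (\<Sum>u\<in>verts G - {u0}. int (card (D u)))"
          using sum.remove[OF finG u0] by blast
        also have "\<dots> = 2 + (\<Sum>u\<in>verts G - {u0}. 1)" using cD by simp
        also have "\<dots> = 2 + int (card (verts G - {u0}))" by simp
        also have "\<dots> = 2 + int (card (verts G) - 1)" using u0 by (simp add: card_Diff_singleton)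
        also have "\<dots> = int (card (verts G)) + 1" using assms(3) by (simp add: of_nat_diff)
        finally show ?thesis .
      qed
      have i1: "int (\<Sum>u\<in>verts G. ?n u - card (D u)) = (\<Sum>u\<in>verts G. int (?n u) - int (card (D u)))"
      proof -
        have "\<And>u. u \<in> verts G \<Longrightarrow> card (D u) \<le> ?n u" using DV finH card_mono by blast
        then show ?thesis unfolding of_nat_sum by (intro sum.cong) (auto simp: of_nat_diff)
      qed
      have i2: "(\<Sum>u\<in>verts G. int (?n u) - int (card (D u))) = (\<Sum>u\<in>verts G. int (?n u)) - (\<Sum>u\<in>verts G. int (card (D u)))"
        by (rule sum_subtractf)
      have "int (card (SIGMA u:verts G. verts (H u) - D u)) = (\<Sum>u\<in>verts G. int (?n u)) - int (card (verts G)) - 1"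
        unfolding cS i1 i2 sD by simp
      with dimle[OF R] eq show False by linarith
    qed
  next
    assume all: "\<forall>u\<in>verts G. graph_iso (H u) (complete_graph (?n u))"
    then have C: "\<forall>u\<in>verts G. \<forall>a\<in>verts (H u). \<forall>b\<in>verts (H u). adj (H u) a b \<longleftrightarrow> a \<noteq> b"
      using iso by blast
    define D where "D u = {e u}" for u
    have De: "\<forall>u\<in>verts G. \<forall>x\<in>verts (H u). \<forall>y\<in>verts (H u). adj (H u) x y \<longrightarrow> x \<notin> D u \<or> y \<notin> D u"
      using irr by (auto simp: D_def)
    have Dn: "\<forall>u\<in>verts G. verts (H u) - D u \<noteq> {}" using Dn_of De by blast
    have R: "local_resolving_set ?P (SIGMA u:verts G. verts (H u) - D u)"
      by (rule resolving[OF G tw Hs De Dn])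
    have cS: "card (SIGMA u:verts G. verts (H u) - D u) = (\<Sum>u\<in>verts G. ?n u - 1)"
    proof -
      have "card (SIGMA u:verts G. verts (H u) - D u) = (\<Sum>u\<in>verts G. card (verts (H u) - D u))"
        using finG finH by simp
      also have "\<dots> = (\<Sum>u\<in>verts G. ?n u - 1)"
      proof (rule sum.cong[OF refl])
        fix u assume u: "u \<in> verts G"
        show "card (verts (H u) - D u) = ?n u - 1"
          unfolding D_def using eV[OF u] finH[OF u] by (simp add: card_Diff_singleton)
      qed
      finally show ?thesis .
    qed
    have le1: "local_metric_dim ?P \<le> (\<Sum>u\<in>verts G. ?n u - 1)" using dimle[OF R] cS by simp
    have "\<exists>k. \<exists>S. local_resolving_set ?P S \<and> card S = k"
      by (rule exI, rule exI, rule conjI[OF R refl])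
    then have "\<exists>S. local_resolving_set ?P S \<and> card S = local_metric_dim ?P"
      unfolding local_metric_dim_def by (rule LeastI_ex)
    then obtain S0 where S0: "local_resolving_set ?P S0" "card S0 = local_metric_dim ?P"
      by (elim exE conjE)
    have le2: "(\<Sum>u\<in>verts G. ?n u - 1) \<le> local_metric_dim ?P"
      using lower[OF G Hs C S0(1)] unfolding S0(2) .
    have "local_metric_dim ?P = (\<Sum>u\<in>verts G. ?n u - 1)" using le1 le2 by (rule antisym)
    then have "int (local_metric_dim ?P) = int (\<Sum>u\<in>verts G. ?n u - 1)" by (rule arg_cong)
    then show "int (local_metric_dim ?P) = (\<Sum>u\<in>verts G. int (?n u)) - int (card (verts G))"
      using isum by linarith
  qed
qed

end
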